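(* Let $0<q<1$. Then \[ \sum_{n=0}^{\infty}\frac{(1/2|q^{2})_{n}^{2}}{[n]_{q^{2}}!\,[n+1]_{q^{2}}!}\,q^{2n}=\frac{(1+q)^{2}q^{1/4}}{\pi_{q}}. \]
   Context: Let $0<q<1$ and write $q^{x}=e^{x\log q}$. $[z]_{q^2}=\frac{1-q^{2z}}{1-q^2}$; $[0]_{q^2}!=1$, $[n]_{q^2}!=\prod_{k=1}^n[k]_{q^2}$; $(1/2|q^2)_n=\prod_{k=0}^{n-1}[1/2+k]_{q^2}$ (empty product $=1$). With $(z;q)_\infty=\prod_{k\ge0}(1-zq^k)$, $\pi_q=(1-q^2)q^{1/4}\frac{(q^2;q^2)_\infty^2}{(q;q^2)_\infty^2}$. *)

theory Defs
  imports "HOL-Analysis.Analysis"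
begin

definition qnum2 :: "real \<Rightarrow> real \<Rightarrow> real" where
  "qnum2 q z = (1 - q powr (2 * z)) / (1 - q\<^sup>2)"

definition qfact2 :: "real \<Rightarrow> nat \<Rightarrow> real" where
  "qfact2 q n = (\<Prod>k = 1..n. qnum2 q (real k))"

definition qpoch_half :: "real \<Rightarrow> nat \<Rightarrow> real" where
  "qpoch_half q n = (\<Prod>k<n. qnum2 q (1/2 + real k))"

definition qpoch_inf :: "real \<Rightarrow> real \<Rightarrow> real" where
  "qpoch_inf z q = (\<Prod>k. (1 - z * q ^ k))"

definition pi_q :: "real \<Rightarrow> real" where
  "pi_q q = (1 - q\<^sup>2) * q powr (1/4) *
      (qpoch_inf (q\<^sup>2) (q\<^sup>2))\<^sup>2 / (qpoch_inf q (q\<^sup>2))\<^sup>2"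

end

theory Submission
  imports Defs
begin


definition CC :: "real \<Rightarrow> real \<Rightarrow> nat \<Rightarrow> real" where
  "CC t c n = (\<Prod>k<n. 1 - c * t ^ k)"

definition F :: "real \<Rightarrow> real \<Rightarrow> real \<Rightarrow> nat \<Rightarrow> real" where
  "F x t c n = (CC t x n)\<^sup>2 / (CC t t n * CC t c n) * (c / x\<^sup>2) ^ n"

lemma CC_pos: "0 \<le> c \<Longrightarrow> c < 1 \<Longrightarrow> 0 < t \<Longrightarrow> t < 1 \<Longrightarrow> CC t c n > 0"
  unfolding CC_def
proof (rule prod_pos)
  fix k assume "0 \<le> c" "c < 1" "0 < t" "t < 1"
  then have "c * t ^ k \<le> c * 1" by (intro mult_left_mono) (auto simp: power_le_one)
  with \<open>c<1\<close> show "0 < 1 - c * t ^ k" by linarith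
qed

lemma CC_Suc: "CC t c (Suc n) = CC t c n * (1 - c * t ^ n)"
  unfolding CC_def by simp

lemma CC_shift: "CC t c (Suc n) = (1 - c) * CC t (c * t) n"
  unfolding CC_def by (subst prod.lessThan_Suc_shift) (simp add: mult.assoc)

lemma F_Suc:
  assumes "0 < t" "t < 1" "0 \<le> c" "c < 1" "x \<noteq> 0"
  shows "F x t c (Suc n) = F x t c n * (1 - x * t^n)\<^sup>2 / ((1 - t * t^n) * (1 - c * t^n)) * (c / x\<^sup>2)"
proof -
  have "CC t t n > 0" "CC t c n > 0" using assms CC_pos by auto
  then show ?thesis unfolding F_def CC_Suc by (simp add: field_simps power2_eq_square)
qed

lemma F_shift:
  assumes "0 < t" "t < 1" "0 \<le> c" "c < 1"
  shows "F x t (c * t) n = F x t c n * ((1 - c) * t ^ n / (1 - c * t ^ n))"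
proof -
  have pos: "CC t t n > 0" "CC t c n > 0" using assms CC_pos by auto
  have "c * t ^ n < 1"
  proof -
    have "c * t ^ n \<le> c * 1" using assms by (intro mult_left_mono) (auto simp: power_le_one)
    then show ?thesis using assms by linarith
  qed
  then have ne: "1 - c * t ^ n \<noteq> 0" by simp
  have e: "CC t (c * t) n = CC t c n * (1 - c * t ^ n) / (1 - c)"
    using CC_shift[of t c n] CC_Suc[of t c n] assms by (simp add: field_simps)
  show ?thesis unfolding F_def e using pos ne assms
    by (simp add: field_simps power_mult_distrib)
qed

lemma gen: "(B::real) \<noteq> 0 \<Longrightarrow> D \<noteq> 0 \<Longrightarrow> B * (Y / (B*D) * k) = Y*k/D"
  by (simp add: field_simps)
lemma key_identity:
  fixes x t c y P :: real
  assumes "x \<noteq> 0" "1 - c * P \<noteq> 0" "1 - t * P \<noteq> 0"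
  shows "(1-c)*(1-c/x\<^sup>2)*y - (1-c/x)\<^sup>2*(y*((1-c)*P/(1-c*P)))
     = -(1-c)*(1-t*P)*(y*(1-x*P)\<^sup>2/((1-t*P)*(1-c*P))*(c/x\<^sup>2)) + (1-c)*(1-P)*y"
proof -
  have a: "(1-c)*(1-c/x\<^sup>2)*y - (1-c/x)\<^sup>2*(y*((1-c)*P/(1-c*P)))
    = (1-c)*y*((x\<^sup>2-c)*(1-c*P) - (x-c)\<^sup>2*P)/(x\<^sup>2*(1-c*P))"
    using assms by (simp add: field_simps power2_eq_square)
  have b0: "(1-t*P)*(y*(1-x*P)\<^sup>2/((1-t*P)*(1-c*P))*(c/x\<^sup>2)) = y*(1-x*P)\<^sup>2*(c/x\<^sup>2)/(1-c*P)"
    using assms gen[of "1-t*P" "1-c*P" "y*(1-x*P)\<^sup>2" "c/x\<^sup>2"] by simp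
  have b: "-(1-c)*(1-t*P)*(y*(1-x*P)\<^sup>2/((1-t*P)*(1-c*P))*(c/x\<^sup>2)) + (1-c)*(1-P)*y
    = (1-c)*y*(x\<^sup>2*(1-P)*(1-c*P) - c*(1-x*P)\<^sup>2)/(x\<^sup>2*(1-c*P))"
    unfolding mult.assoc[of "-(1-c)"] b0 using assms by (simp add: field_simps power2_eq_square)
  have c: "(x\<^sup>2-c)*(1-c*P) - (x-c)\<^sup>2*P = x\<^sup>2*(1-P)*(1-c*P) - c*(1-x*P)\<^sup>2"
    by (simp add: algebra_simps power2_eq_square)
  show ?thesis using a b c by simp
qed

lemma tel_step: "(I::real) = B + (1-c)*(1-P)*y \<Longrightarrow> -(1-c)*(1-P)*y + I = B" by (simp add: algebra_simps)

lemma telescope: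
  assumes "0 < t" "t < 1" "0 \<le> c" "c < 1" "x \<noteq> 0"
  shows "(1-c)*(1-c/x\<^sup>2)*(\<Sum>n<N. F x t c n) - (1-c/x)\<^sup>2*(\<Sum>n<N. F x t (c*t) n)
         = -(1-c)*(1-t^N)*F x t c N"
proof (induction N)
  case 0
  then show ?case by (simp add: F_def CC_def)
next
  case (Suc N)
  have ctN: "c * t ^ N < 1"
  proof -
    have "c * t ^ N \<le> c * 1" using assms by (intro mult_left_mono) (auto simp: power_le_one)
    then show ?thesis using assms by linarith
  qed
  have "t * t ^ N \<le> t * 1" using assms by (intro mult_left_mono) (auto simp: power_le_one)
  then have tN: "t * t ^ N < 1" using assms by linarith
  have "(1-c)*(1-c/x\<^sup>2)*(\<Sum>n<Suc N. F x t c n) - (1-c/x)\<^sup>2*(\<Sum>n<Suc N. F x t (c*t) n)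
     = ((1-c)*(1-c/x\<^sup>2)*(\<Sum>n<N. F x t c n) - (1-c/x)\<^sup>2*(\<Sum>n<N. F x t (c*t) n))
       + ((1-c)*(1-c/x\<^sup>2)*F x t c N - (1-c/x)\<^sup>2*F x t (c*t) N)"
    by (simp add: algebra_simps)
  also have "\<dots> = -(1-c)*(1-t^N)*F x t c N + ((1-c)*(1-c/x\<^sup>2)*F x t c N - (1-c/x)\<^sup>2*(F x t c N * ((1 - c) * t ^ N / (1 - c * t ^ N))))"
    using Suc F_shift[OF assms(1-4)] by simp
  also have "\<dots> = -(1-c)*(1-t * t^N)*(F x t c N * (1-x*t^N)\<^sup>2/((1-t*t^N)*(1-c*t^N))*(c/x\<^sup>2))"
    by (rule tel_step[OF key_identity[of x c "t^N" t "F x t c N"]]) (use assms ctN tN in auto)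
  also have "\<dots> = -(1-c)*(1-t^Suc N)*F x t c (Suc N)"
    using F_Suc[OF assms] by simp
  finally show ?case .
qed

lemma F_nonneg: "0 \<le> c \<Longrightarrow> c < 1 \<Longrightarrow> 0 < t \<Longrightarrow> t < 1 \<Longrightarrow> 0 \<le> F x t c n"
  unfolding F_def using CC_pos[of c t n] CC_pos[of t t n] by (intro mult_nonneg_nonneg divide_nonneg_pos) auto

lemma F_0: "F x t c 0 = 1" by (simp add: F_def CC_def)

lemma ag: "(a::real) * b / d * e = a * (b / d * e)" by simp

lemma F_summable:
  assumes "0 < t" "t < 1" "0 \<le> c" "c < 1" "x \<noteq> 0" "c < x\<^sup>2"
  shows "summable (F x t c)"
proof -
  define z where "z = c / x\<^sup>2"
  have z: "0 \<le> z" "z < 1" using assms by (auto simp: z_def)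
  have lim: "(\<lambda>n. (1 - x*t^n)\<^sup>2/((1-t*t^n)*(1-c*t^n))*z) \<longlonglongrightarrow> (1-x*0)\<^sup>2/((1-t*0)*(1-c*0))*z"
    using assms by (intro tendsto_intros LIMSEQ_power_zero) auto
  then have lim': "(\<lambda>n. (1 - x*t^n)\<^sup>2/((1-t*t^n)*(1-c*t^n))*z) \<longlonglongrightarrow> z" by simp
  have "(1+z)/2 > z" using z by simp
  from order_tendstoD(2)[OF lim' this] obtain N where
    N: "\<And>n. n \<ge> N \<Longrightarrow> (1 - x*t^n)\<^sup>2/((1-t*t^n)*(1-c*t^n))*z < (1+z)/2"
    unfolding eventually_sequentially by blast
  show ?thesis
  proof (rule summable_ratio_test[of "(1+z)/2" N])
    show "(1+z)/2 < 1" using z by simp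
    fix n assume "N \<le> n"
    have "t * t ^ n \<le> t * 1" using assms by (intro mult_left_mono) (auto simp: power_le_one)
    then have a1: "t * t ^ n < 1" using assms by linarith
    have "c * t ^ n \<le> c * 1" using assms by (intro mult_left_mono) (auto simp: power_le_one)
    then have a2: "c * t ^ n < 1" using assms by linarith
    have r: "(1 - x*t^n)\<^sup>2/((1-t*t^n)*(1-c*t^n))*z \<ge> 0"
      using z a1 a2 by (intro mult_nonneg_nonneg divide_nonneg_pos) auto
    have nn: "0 \<le> F x t c n" "0 \<le> F x t c (Suc n)" using F_nonneg assms by auto
    have "norm (F x t c (Suc n)) = F x t c (Suc n)" using nn by simp
    also have "\<dots> = F x t c n * (1 - x * t^n)\<^sup>2 / ((1 - t * t^n) * (1 - c * t^n)) * (c / x\<^sup>2)"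
      by (rule F_Suc[OF assms(1-5)])
    also have "\<dots> = F x t c n * ((1 - x*t^n)\<^sup>2/((1-t*t^n)*(1-c*t^n))*z)"
      unfolding z_def by (rule ag)
    also have "\<dots> \<le> F x t c n * ((1+z)/2)"
      using N[OF \<open>N \<le> n\<close>] nn by (intro mult_left_mono) auto
    finally show "norm (F x t c (Suc n)) \<le> (1+z)/2 * norm (F x t c n)"
      using nn by (simp add: mult.commute)
  qed
qed

lemma F_relation:
  assumes "0 < t" "t < 1" "0 \<le> c" "c < 1" "x \<noteq> 0" "c < x\<^sup>2"
  shows "(1-c)*(1-c/x\<^sup>2)* suminf (F x t c) = (1-c/x)\<^sup>2* suminf (F x t (c*t))"
proof -
  have s1: "summable (F x t c)" by (rule F_summable[OF assms])
  have "c * t \<le> c * 1" using assms by (intro mult_left_mono) auto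
  then have ct: "0 \<le> c*t" "c*t < 1" "c * t < x\<^sup>2"
    using assms by auto
  have s2: "summable (F x t (c*t))" by (rule F_summable[OF assms(1,2) ct(1,2) assms(5) ct(3)])
  have l1: "(\<lambda>N. (1-c)*(1-c/x\<^sup>2)*(\<Sum>n<N. F x t c n) - (1-c/x)\<^sup>2*(\<Sum>n<N. F x t (c*t) n))
      \<longlonglongrightarrow> (1-c)*(1-c/x\<^sup>2)* suminf (F x t c) - (1-c/x)\<^sup>2* suminf (F x t (c*t))"
    by (intro tendsto_intros summable_LIMSEQ s1 s2)
  have l2: "(\<lambda>N. -(1-c)*(1-t^N)*F x t c N) \<longlonglongrightarrow> -(1-c)*(1-0)*0"
    using assms by (intro tendsto_intros LIMSEQ_power_zero summable_LIMSEQ_zero s1) auto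
  have "(1-c)*(1-c/x\<^sup>2)* suminf (F x t c) - (1-c/x)\<^sup>2* suminf (F x t (c*t)) = -(1-c)*(1-0)*0"
    using LIMSEQ_unique[OF l1 l2[folded telescope[OF assms(1-5)]]] .
  then show ?thesis by simp
qed

lemma F_le:
  assumes "0 < t" "t < 1" "0 < c" "c \<le> c0" "c0 < 1" "x \<noteq> 0"
  shows "F x t c n \<le> F x t c0 n * (c/c0)^n"
proof -
  have pos: "CC t t n > 0" "CC t c n > 0" "CC t c0 n > 0" using assms CC_pos by auto
  have mono: "CC t c0 n \<le> CC t c n"
    unfolding CC_def
  proof (rule prod_mono)
    fix k assume "k \<in> {..<n}"
    have "c0 * t^k \<le> 1 * 1" using assms by (intro mult_mono) (auto simp: power_le_one)
    moreover have "c * t^k \<le> c0 * t^k" using assms by (intro mult_right_mono) auto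
    ultimately show "0 \<le> 1 - c0 * t ^ k \<and> 1 - c0 * t ^ k \<le> 1 - c * t ^ k" by auto
  qed
  have e: "(c/x\<^sup>2)^n = (c0/x\<^sup>2)^n * (c/c0)^n"
    using assms by (simp add: power_mult_distrib[symmetric])
  have le:  "(CC t x n)\<^sup>2 / (CC t t n * CC t c n) \<le> (CC t x n)\<^sup>2 / (CC t t n * CC t c0 n)"
    using pos mono by (intro divide_left_mono mult_left_mono mult_pos_pos) auto
  have nn: "0 \<le> (c0/x\<^sup>2)^n * (c/c0)^n" using assms by simp
  have "F x t c n = (CC t x n)\<^sup>2 / (CC t t n * CC t c n) * ((c0/x\<^sup>2)^n * (c/c0)^n)"
    unfolding F_def e ..
  also have "\<dots> \<le> (CC t x n)\<^sup>2 / (CC t t n * CC t c0 n) * ((c0/x\<^sup>2)^n * (c/c0)^n)"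
    by (rule mult_right_mono[OF le nn])
  also have "\<dots> = F x t c0 n * (c/c0)^n" unfolding F_def by simp
  finally show ?thesis .
qed

lemma S_bound:
  assumes "0 < t" "t < 1" "0 < c" "c \<le> c0" "c0 < 1" "x \<noteq> 0" "c0 < x\<^sup>2"
  shows "1 \<le> suminf (F x t c) \<and> suminf (F x t c) \<le> 1 + (c/c0) * (suminf (F x t c0) - 1)"
proof -
  have c0: "0 \<le> c0" using assms by simp
  have s: "summable (F x t c)" using assms by (intro F_summable) auto
  have s0: "summable (F x t c0)" using assms by (intro F_summable) auto
  have h: "(\<Sum>n. F x t c (Suc n)) = suminf (F x t c) - 1"
    using suminf_split_head[OF s] F_0 by simp
  have h0: "(\<Sum>n. F x t c0 (Suc n)) = suminf (F x t c0) - 1"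
    using suminf_split_head[OF s0] F_0 by simp
  have ss: "summable (\<lambda>n. F x t c (Suc n))" using s summable_Suc_iff by blast
  have ss0: "summable (\<lambda>n. F x t c0 (Suc n))" using s0 summable_Suc_iff by blast
  have "0 \<le> (\<Sum>n. F x t c (Suc n))"
    using assms by (intro suminf_nonneg ss F_nonneg) auto
  moreover have "(\<Sum>n. F x t c (Suc n)) \<le> (\<Sum>n. (c/c0) * F x t c0 (Suc n))"
  proof (rule suminf_le)
    fix n
    have r: "0 \<le> c/c0" "c/c0 \<le> 1" using assms by auto
    have "(c/c0)^Suc n \<le> (c/c0) * 1" unfolding power_Suc using r by (intro mult_left_mono power_le_one) auto
    then have "F x t c0 (Suc n) * (c/c0)^Suc n \<le> F x t c0 (Suc n) * (c/c0)"
      using F_nonneg[of c0 t x "Suc n"] assms by (intro mult_left_mono) auto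
    then show "F x t c (Suc n) \<le> c / c0 * F x t c0 (Suc n)"
      using F_le[OF assms(1-6), of "Suc n"] by (simp add: mult.commute)
  qed (use ss ss0 in \<open>auto intro: summable_mult\<close>)
  moreover have "(\<Sum>n. (c/c0) * F x t c0 (Suc n)) = (c/c0) * (\<Sum>n. F x t c0 (Suc n))"
    by (rule suminf_mult[OF ss0])
  ultimately show ?thesis using h h0 by simp
qed

lemma CC_lim:
  assumes "0 \<le> z" "z < 1" "0 < t" "t < 1"
  shows "(\<lambda>N. CC t z N) \<longlonglongrightarrow> qpoch_inf z t" "qpoch_inf z t > 0"
proof -
  have lt: "z * t^k < 1" for k
  proof -
    have "z * t ^ k \<le> z * 1" using assms by (intro mult_left_mono) (auto simp: power_le_one)
    then show ?thesis using assms by linarith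
  qed
  have sa: "summable (\<lambda>k. \<bar>- (z * t^k)\<bar>)"
    using assms by (simp add: abs_mult summable_geometric)
  have "convergent_prod (\<lambda>k. 1 + - (z * t^k))"
    by (rule summable_imp_convergent_prod_real[OF sa]) (metis lt less_irrefl neg_equal_iff_equal)
  then have cp: "convergent_prod (\<lambda>k. 1 - z * t^k)" by simp
  have "(\<lambda>N. \<Prod>k<N. 1 - z * t^k) \<longlonglongrightarrow> prodinf (\<lambda>k. 1 - z * t^k)"
    by (rule has_prod_imp_tendsto'[OF convergent_prod_has_prod[OF cp]])
  then show "(\<lambda>N. CC t z N) \<longlonglongrightarrow> qpoch_inf z t" unfolding CC_def qpoch_inf_def .
  show "qpoch_inf z t > 0" unfolding qpoch_inf_def
    by (rule less_0_prodinf[OF cp]) (use lt in auto)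
qed

lemma solve_gen:
  fixes a b Q2 s Q1 :: real
  shows "a \<noteq> 0 \<Longrightarrow> b \<noteq> 0 \<Longrightarrow> Q2 \<noteq> 0 \<Longrightarrow> s*(Q2/b*Q2) = (Q1/a)\<^sup>2*1 \<Longrightarrow> s = b*Q1\<^sup>2/(a\<^sup>2*Q2\<^sup>2)"
  by (simp add: field_simps power2_eq_square)

lemma s_value:
  fixes q :: real
  assumes q: "0 < q" "q < 1"
  defines "t \<equiv> q\<^sup>2"
  shows "suminf (F q t (t*t)) = (1-t) * (qpoch_inf q t)\<^sup>2 / ((1-q)\<^sup>2 * (qpoch_inf t t)\<^sup>2)"
proof -
  have t: "0 < t" "t < 1" using q by (auto simp: t_def power_less_one_iff)
  define s where "s j = suminf (F q t (t*t*t^j))" for j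
  have tj: "t*t*t^j < 1" "t*t*t^j < q\<^sup>2" "0 < t*t*t^j" for j
  proof -
    have "t*t*t^j \<le> t*t*1" using t by (intro mult_left_mono power_le_one) auto
    moreover have "t*t < t*1" using t by (intro mult_strict_left_mono) auto
    moreover have "q\<^sup>2 = t" by (simp add: t_def)
    ultimately show "t*t*t^j < 1" "t*t*t^j < q\<^sup>2" using t by linarith+
    show "0 < t*t*t^j" using t by simp
  qed
  have rel: "(1 - t*t*t^j)*(1 - t*t^j) * s j = (1 - q*t*t^j)\<^sup>2 * s (Suc j)" for j
  proof -
    have r: "(1-t*t*t^j)*(1-t*t*t^j/q\<^sup>2)* suminf (F q t (t*t*t^j)) = (1-t*t*t^j/q)\<^sup>2* suminf (F q t (t*t*t^j*t))"
      using tj[of j] t q by (intro F_relation) auto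
    have e1: "t*t*t^j/q\<^sup>2 = t*t^j" "t*t*t^j/q = q*t*t^j" "t*t*t^j*t = t*t*t^Suc j"
      using q by (auto simp: t_def power2_eq_square field_simps)
    show ?thesis using r unfolding e1 s_def .
  qed
  have iter: "s 0 * (CC t (t*t) N * CC t t N) = (CC t (q*t) N)\<^sup>2 * s N" for N
  proof (induction N)
    case 0 then show ?case by (simp add: CC_def)
  next
    case (Suc N)
    have "s 0 * (CC t (t*t) (Suc N) * CC t t (Suc N)) = (s 0 * (CC t (t*t) N * CC t t N)) * ((1 - t*t*t^N)*(1 - t*t^N))"
      by (simp add: CC_Suc)
    also have "\<dots> = (CC t (q*t) N)\<^sup>2 * ((1 - t*t*t^N)*(1 - t*t^N) * s N)" using Suc by simp
    also have "\<dots> = (CC t (q*t) (Suc N))\<^sup>2 * s (Suc N)" using rel[of N] by (simp add: CC_Suc power_mult_distrib)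
    finally show ?case .
  qed
  have sN: "(\<lambda>N. s N) \<longlonglongrightarrow> 1"
  proof (rule real_tendsto_sandwich[where f="\<lambda>_. 1" and h="\<lambda>N. 1 + t^N * (s 0 - 1)"])
    have b: "1 \<le> s N \<and> s N \<le> 1 + (t*t*t^N/(t*t*t^0)) * (s 0 - 1)" for N
    proof -
      have "t*t*t^N \<le> t*t*t^0" using t by (intro mult_left_mono) (auto simp: power_le_one)
      then show ?thesis unfolding s_def using tj[of N] tj[of 0] t q
        by (intro S_bound) auto
    qed
    show "\<forall>\<^sub>F N in sequentially. 1 \<le> s N" using b by simp
    show "\<forall>\<^sub>F N in sequentially. s N \<le> 1 + t^N * (s 0 - 1)" using b t by simp
    show "(\<lambda>_. 1) \<longlonglongrightarrow> (1::real)" by simp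
    have "(\<lambda>N. 1 + t^N * (s 0 - 1)) \<longlonglongrightarrow> 1 + 0 * (s 0 - 1)"
      using t by (intro tendsto_intros LIMSEQ_power_zero) auto
    then show "(\<lambda>N. 1 + t^N * (s 0 - 1)) \<longlonglongrightarrow> 1" by simp
  qed
  obtain L1 where L1: "(\<lambda>N. CC t q N) \<longlonglongrightarrow> qpoch_inf q t" "qpoch_inf q t > 0"
    using CC_lim[of q t] q t by auto
  obtain L2 where L2: "(\<lambda>N. CC t t N) \<longlonglongrightarrow> qpoch_inf t t" "qpoch_inf t t > 0"
    using CC_lim[of t t] t by auto
  have e2: "CC t (t*t) N = CC t t (Suc N) / (1-t)" "CC t (q*t) N = CC t q (Suc N) / (1-q)" for N
    using CC_shift[of t t N] CC_shift[of t q N] t q by (auto simp: field_simps)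
  have lA: "(\<lambda>N. s 0 * (CC t (t*t) N * CC t t N)) \<longlonglongrightarrow> s 0 * (qpoch_inf t t / (1-t) * qpoch_inf t t)"
    unfolding e2 using L2 t by (intro tendsto_intros) (auto simp: LIMSEQ_Suc)
  have lB: "(\<lambda>N. (CC t (q*t) N)\<^sup>2 * s N) \<longlonglongrightarrow> (qpoch_inf q t / (1-q))\<^sup>2 * 1"
    unfolding e2 using L1 q sN by (intro tendsto_intros) (auto simp: LIMSEQ_Suc)
  have "s 0 * (qpoch_inf t t / (1-t) * qpoch_inf t t) = (qpoch_inf q t / (1-q))\<^sup>2 * 1"
    using LIMSEQ_unique[OF lA lB[folded iter]] .
  then have "s 0 = (1-t)*(qpoch_inf q t)\<^sup>2/((1-q)\<^sup>2*(qpoch_inf t t)\<^sup>2)"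
    by (rule solve_gen[rotated 3]) (use L1 L2 t q in auto)
  then show ?thesis by (simp add: s_def)
qed




lemma pw1: "0 < q \<Longrightarrow> q powr (2 * (1/2 + real k)) = q * (q\<^sup>2)^k"
proof -
  assume q: "0 < q"
  have "2 * (1/2 + real k) = real (Suc (2*k))" by simp
  then have "q powr (2 * (1/2 + real k)) = q ^ Suc (2*k)"
    using q by (simp only: powr_realpow)
  also have "\<dots> = q * (q\<^sup>2)^k" by (simp only: power_Suc power_mult)
  finally show ?thesis .
qed

lemma pw2: "0 < q \<Longrightarrow> q powr (2 * real (k::nat)) = (q\<^sup>2)^k"
proof -
  assume q: "0 < q"
  have "2 * real k = real (2*k)" by simp
  then have "q powr (2 * real k) = q ^ (2*k)"
    using q by (simp only: powr_realpow)
  also have "\<dots> = (q\<^sup>2)^k" by (simp only: power_mult)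
  finally show ?thesis .
qed

lemma qpoch_half_eq:
  assumes "0 < q"
  shows "qpoch_half q n = CC (q\<^sup>2) q n / (1 - q\<^sup>2)^n"
proof -
  have "qnum2 q (1/2 + real k) = (1 - q * (q\<^sup>2)^k) / (1 - q\<^sup>2)" for k
    unfolding qnum2_def pw1[OF assms] ..
  then have "qpoch_half q n = (\<Prod>k<n. (1 - q * (q\<^sup>2)^k) / (1 - q\<^sup>2))"
    unfolding qpoch_half_def by simp
  also have "\<dots> = CC (q\<^sup>2) q n / (1 - q\<^sup>2)^n"
    unfolding CC_def by (simp add: prod_dividef)
  finally show ?thesis .
qed

lemma qfact2_eq:
  assumes "0 < q"
  shows "qfact2 q n = CC (q\<^sup>2) (q\<^sup>2) n / (1 - q\<^sup>2)^n"
proof (induction n)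
  case 0 then show ?case by (simp add: qfact2_def CC_def)
next
  case (Suc n)
  have a: "qnum2 q (real (Suc n)) = (1 - q\<^sup>2 * (q\<^sup>2)^n) / (1 - q\<^sup>2)"
    unfolding qnum2_def pw2[OF assms] by simp
  have b: "qfact2 q (Suc n) = qfact2 q n * qnum2 q (real (Suc n))"
    unfolding qfact2_def by (simp add: prod.cl_ivl_Suc)
  show ?case unfolding b a Suc CC_Suc by simp
qed

lemma gen_term:
  fixes A P R d T :: real
  assumes "d > 0" "P > 0" "R > 0"
  shows "(A / d^n)\<^sup>2 / (P / d^n * ((d * R) / d^(Suc n))) * T = A\<^sup>2 / (P * R) * T"
  using assms by (simp add: field_simps power2_eq_square)

lemma gen_final0:
  fixes a b w Q1 Q2 :: real
  assumes "a > 0" "b > 0" "w > 0" "Q1 > 0" "Q2 > 0"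
  shows "(a*b) * Q1\<^sup>2 / (a\<^sup>2 * Q2\<^sup>2) = b\<^sup>2 * w / ((a*b) * w * Q2\<^sup>2 / Q1\<^sup>2)"
  using assms by (simp add: field_simps power2_eq_square)

lemma gen_final:
  fixes q w Q1 Q2 :: real
  assumes "0 < q" "q < 1" "w > 0" "Q1 > 0" "Q2 > 0"
  shows "(1 - q\<^sup>2) * Q1\<^sup>2 / ((1 - q)\<^sup>2 * Q2\<^sup>2) = (1 + q)\<^sup>2 * w / ((1 - q\<^sup>2) * w * Q2\<^sup>2 / Q1\<^sup>2)"
proof -
  have e: "1 - q\<^sup>2 = (1-q)*(1+q)" by (simp add: algebra_simps power2_eq_square)
  have "1 - q > 0" "1 + q > 0" using assms by auto
  then show ?thesis unfolding e using assms gen_final0[of "1-q" "1+q" w Q1 Q2] by simp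
qed

theorem mainTheorem5:
  fixes q :: real
  assumes "0 < q" and "q < 1"
  shows "(\<lambda>n. (qpoch_half q n)\<^sup>2 / (qfact2 q n * qfact2 q (n + 1)) * q ^ (2 * n))
           sums ((1 + q)\<^sup>2 * q powr (1/4) / pi_q q)"
proof -
  define t where "t = q\<^sup>2"
  have t: "0 < t" "t < 1" using assms by (auto simp: t_def power_less_one_iff)
  have tt: "t * t / q\<^sup>2 = t" using t by (simp add: t_def[symmetric])
  have c0: "0 \<le> t*t" "t*t < 1" "t*t < q\<^sup>2"
    using t mult_strict_left_mono[of t 1 t] by (auto simp: t_def)
  have trm: "(qpoch_half q n)\<^sup>2 / (qfact2 q n * qfact2 q (n + 1)) * q ^ (2 * n) = F q t (t*t) n" for n
  proof -
    have P: "CC t t n > 0" "CC t (t*t) n > 0" using CC_pos t c0 by auto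
    have "(qpoch_half q n)\<^sup>2 / (qfact2 q n * qfact2 q (n + 1)) * q ^ (2 * n)
      = (CC t q n / (1-t)^n)\<^sup>2 / (CC t t n / (1-t)^n * (((1-t) * CC t (t*t) n) / (1-t)^(Suc n))) * t^n"
      unfolding qpoch_half_eq[OF assms(1)] qfact2_eq[OF assms(1)] Suc_eq_plus1[symmetric] CC_shift
      by (simp add: t_def power_mult)
    also have "\<dots> = (CC t q n)\<^sup>2 / (CC t t n * CC t (t*t) n) * t^n"
      using t P by (intro gen_term) auto
    also have "\<dots> = F q t (t*t) n" unfolding F_def tt ..
    finally show ?thesis .
  qed
  have sm: "summable (F q t (t*t))"
    using F_summable[OF t c0(1,2) _ c0(3)] assms by auto
  have v: "suminf (F q t (t*t)) = (1-t) * (qpoch_inf q t)\<^sup>2 / ((1-q)\<^sup>2 * (qpoch_inf t t)\<^sup>2)"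
    using s_value[OF assms] unfolding t_def .
  have Q: "qpoch_inf q t > 0" "qpoch_inf t t > 0" using CC_lim assms t by auto
  have fin: "(1-t) * (qpoch_inf q t)\<^sup>2 / ((1-q)\<^sup>2 * (qpoch_inf t t)\<^sup>2) = (1 + q)\<^sup>2 * q powr (1/4) / pi_q q"
    unfolding pi_q_def t_def using gen_final[OF assms _ Q[unfolded t_def]] assms by simp
  show ?thesis unfolding trm
    using summable_sums[OF sm] unfolding v fin .
qed

end
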